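(* Let $H$ be an $n\times n$ Hermitian matrix, $\hbar>0$, $\psi_0\in\mathbb C^n$ with $\|\psi_0\|=1$, $\rho_0=\psi_0\psi_0^\dagger$, and $\kappa(t)$ an arbitrary smooth curve of skew-Hermitian matrices. Let $U(t)\in\mathcal U(n)$ solve $\dot U=U\xi_H$ with $$\xi_H=-i\hbar^{-1}H_H+\{\mathbf 1-2\rho_0,\kappa\},\qquad H_H:=U^\dagger HU .$$ Then (i) $[\,i\hbar\xi_H-H_H,\rho_0]=0$; (ii) $\dot H_H=[H_H,\{\mathbf 1-2\rho_0,\kappa\}]$, and the energy is conserved: $\mathrm{Tr}(\rho_0\dot H_H)=0$; (iii) $\psi(t)=U(t)\psi_0$ satisfies $i\hbar\dot\psi=H\psi+\alpha\psi$ with the real function $\alpha=-2i\hbar\,\psi_0^\dagger\kappa\psi_0$.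
   Context: $\{A,B\}=AB+BA$, $[A,B]=AB-BA$, $\mathbf 1$ is the identity matrix. *)

theory Defs
  imports "HOL-Analysis.Analysis"
begin

text \<open>Complex n x n matrices are modelled as complex^'n^'n (n = CARD('n)).\<close>

definition conj_transpose :: "complex^'n^'m \<Rightarrow> complex^'m^'n" where
  "conj_transpose A = (\<chi> i j. cnj (A $ j $ i))"

definition hermitian :: "complex^'n^'n \<Rightarrow> bool" where
  "hermitian A \<longleftrightarrow> conj_transpose A = A"

definition skew_hermitian :: "complex^'n^'n \<Rightarrow> bool" where
  "skew_hermitian A \<longleftrightarrow> conj_transpose A = - A"

definition unitary :: "complex^'n^'n \<Rightarrow> bool" where
  "unitary U \<longleftrightarrow> conj_transpose U ** U = mat 1 \<and> U ** conj_transpose U = mat 1"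

definition cscale :: "complex \<Rightarrow> complex^'n^'m \<Rightarrow> complex^'n^'m" where
  "cscale c A = (\<chi> i j. c * A $ i $ j)"

definition anticomm :: "complex^'n^'n \<Rightarrow> complex^'n^'n \<Rightarrow> complex^'n^'n" where
  "anticomm A B = A ** B + B ** A"

definition comm :: "complex^'n^'n \<Rightarrow> complex^'n^'n \<Rightarrow> complex^'n^'n" where
  "comm A B = A ** B - B ** A"

definition outer :: "complex^'n \<Rightarrow> complex^'n \<Rightarrow> complex^'n^'n" where
  "outer x y = (\<chi> i j. x $ i * cnj (y $ j))"

definition herm_inner :: "complex^'n \<Rightarrow> complex^'n \<Rightarrow> complex" where
  "herm_inner x y = (\<Sum>i\<in>UNIV. cnj (x $ i) * y $ i)"

fun nth_vderiv :: "nat \<Rightarrow> (real \<Rightarrow> 'a::real_normed_vector) \<Rightarrow> real \<Rightarrow> 'a" where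
  "nth_vderiv 0 f = f"
| "nth_vderiv (Suc k) f = (\<lambda>t. vector_derivative (nth_vderiv k f) (at t))"

definition smooth_on :: "real set \<Rightarrow> (real \<Rightarrow> 'a::real_normed_vector) \<Rightarrow> bool" where
  "smooth_on S f \<longleftrightarrow> (\<forall>k. \<forall>t\<in>S. nth_vderiv k f differentiable (at t))"

end

theory Submission imports Defs begin

type_synonym 'n cm = "complex^'n^'n"

lemma cscale_mult_left: "cscale c (A ** B) = cscale c A ** (B::complex^_^_)"
  by (simp add: cscale_def matrix_matrix_mult_def vec_eq_iff sum_distrib_left mult.assoc)
lemma cscale_mult_right: "A ** cscale c B = cscale c (A ** (B::complex^_^_))"
  by (simp add: cscale_def matrix_matrix_mult_def vec_eq_iff sum_distrib_left algebra_simps)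
lemma cscale_add: "cscale c (A + B) = cscale c A + cscale c B"
  by (simp add: cscale_def vec_eq_iff algebra_simps)
lemma cscale_diff: "cscale c (A - B) = cscale c A - cscale c B"
  by (simp add: cscale_def vec_eq_iff algebra_simps)
lemma cscale_neg: "cscale c (- B) = - cscale c B"
  by (simp add: cscale_def vec_eq_iff algebra_simps)
lemma cscale_cscale: "cscale c (cscale d A) = cscale (c*d) A"
  by (simp add: cscale_def vec_eq_iff algebra_simps)
lemma cscale_1: "cscale 1 A = A"
  by (simp add: cscale_def vec_eq_iff)
lemma cscale_minus: "cscale (- c) A = - cscale c A"
  by (simp add: cscale_def vec_eq_iff)
lemma cscale_0: "cscale c 0 = 0"
  by (simp add: cscale_def vec_eq_iff)
lemma matrix_add_rdistrib': "((B + C) ** A) = (B ** A) + (C ** (A::complex^_^_))"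
  by (vector matrix_matrix_mult_def sum.distrib[symmetric] field_simps)
lemma matrix_sub_ldistrib: "(A ** (B - C)) = (A ** B) - (A ** (C::complex^_^_))"
  by (vector matrix_matrix_mult_def sum_subtractf[symmetric] field_simps)
lemma matrix_sub_rdistrib: "((B - C) ** A) = (B ** A) - (C ** (A::complex^_^_))"
  by (vector matrix_matrix_mult_def sum_subtractf[symmetric] field_simps)
lemma matrix_neg_left: "(- B) ** A = - (B ** (A::complex^_^_))"
  by (vector matrix_matrix_mult_def sum_negf[symmetric] field_simps)
lemma matrix_neg_right: "A ** (- B) = - (A ** (B::complex^_^_))"
  by (vector matrix_matrix_mult_def sum_negf[symmetric] field_simps)

lemma ct_mult: "conj_transpose (A ** B) = conj_transpose B ** conj_transpose (A::complex^_^_)"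
  by (simp add: conj_transpose_def matrix_matrix_mult_def vec_eq_iff mult.commute)
lemma ct_add: "conj_transpose (A + B) = conj_transpose A + conj_transpose B"
  by (simp add: conj_transpose_def vec_eq_iff)
lemma ct_diff: "conj_transpose (A - B) = conj_transpose A - conj_transpose B"
  by (simp add: conj_transpose_def vec_eq_iff)
lemma ct_neg: "conj_transpose (- B) = - conj_transpose B"
  by (simp add: conj_transpose_def vec_eq_iff)
lemma ct_cscale: "conj_transpose (cscale c A) = cscale (cnj c) (conj_transpose A)"
  by (simp add: conj_transpose_def cscale_def vec_eq_iff)
lemma ct_ct: "conj_transpose (conj_transpose A) = A"
  by (simp add: conj_transpose_def vec_eq_iff)
lemma ct_mat: "conj_transpose (mat 1 :: complex^'n^'n) = mat 1"
  by (simp add: conj_transpose_def vec_eq_iff mat_def)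
lemma ct_outer: "conj_transpose (outer x x) = outer x x"
  by (simp add: conj_transpose_def outer_def vec_eq_iff)

lemma cscale_mv: "cscale c A *v v = c *s (A *v v)"
  by (simp add: cscale_def matrix_vector_mult_def vec_eq_iff sum_distrib_left mult.assoc)
lemma mv_smult: "A *v (c *s v) = c *s (A *v (v::complex^_))"
  by (simp add: matrix_vector_mult_def vec_eq_iff sum_distrib_left algebra_simps)
lemma mv_neg: "A *v (- v) = - (A *v (v::complex^_))"
  by (simp add: matrix_vector_mult_def vec_eq_iff sum_negf)
lemma outer_mv: "outer x y *v z = herm_inner y z *s x"
  by (simp add: outer_def herm_inner_def matrix_vector_mult_def vec_eq_iff sum_distrib_left algebra_simps)
lemma outer_outer: "outer x y ** outer z w = cscale (herm_inner y z) (outer x w)"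
  by (simp add: outer_def herm_inner_def cscale_def matrix_matrix_mult_def vec_eq_iff sum_distrib_left sum_distrib_right algebra_simps)

lemma herm_inner_self: "herm_inner x x = of_real ((norm x)^2)"
proof -
  have "herm_inner x x = (\<Sum>i\<in>UNIV. of_real ((norm (x$i))^2))"
    unfolding herm_inner_def
    by (rule sum.cong) (auto simp: complex_norm_square[symmetric] mult.commute)
  also have "\<dots> = of_real ((norm x)^2)"
    by (simp add: norm_vec_def L2_set_def sum_nonneg of_real_power[symmetric] del: of_real_power)
  finally show ?thesis .
qed

lemma bilin: "bilinear ((**) :: complex^'n^'n \<Rightarrow> complex^'n^'n \<Rightarrow> complex^'n^'n)"
  unfolding bilinear_def linear_iff
  by (auto simp: matrix_add_ldistrib matrix_add_rdistrib' vec_eq_iff matrix_matrix_mult_def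
      vector_scaleR_component scaleR_conv_of_real[where 'a=complex] sum.distrib sum_distrib_left algebra_simps)

lemma bbilin: "bounded_bilinear ((**) :: complex^'n^'n \<Rightarrow> complex^'n^'n \<Rightarrow> complex^'n^'n)"
  using bilin bilinear_conv_bounded_bilinear by blast

lemma blin_ct: "bounded_linear (conj_transpose :: complex^'n^'n \<Rightarrow> complex^'n^'n)"
  unfolding linear_conv_bounded_linear[symmetric] linear_iff
  by (auto simp: ct_add conj_transpose_def vec_eq_iff vector_scaleR_component scaleR_conv_of_real[where 'a=complex] sum.distrib)

lemma blin_mv: "bounded_linear (\<lambda>A::complex^'n^'n. A *v v)"
  unfolding linear_conv_bounded_linear[symmetric] linear_iff
  by (auto simp: matrix_vector_mult_add_rdistrib vec_eq_iff matrix_vector_mult_def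
      vector_scaleR_component scaleR_conv_of_real[where 'a=complex] sum.distrib sum_distrib_left algebra_simps)


theorem mainTheorem7:
  fixes H :: "complex^'n^'n"
    and hbar :: real
    and psi0 :: "complex^'n"
    and kappa U :: "real \<Rightarrow> complex^'n^'n"
    and T :: "real set"
  assumes hH: "hermitian H"
    and hbar: "hbar > 0"
    and psi0: "norm psi0 = 1"
    and T: "open T"
    and kappa_skew: "\<forall>t\<in>T. skew_hermitian (kappa t)"
    and kappa_smooth: "smooth_on T kappa"
    and U_unitary: "\<forall>t\<in>T. unitary (U t)"
    and U_ode: "\<forall>t\<in>T. (U has_vector_derivative
        (U t ** (cscale (- \<i> / hbar) (conj_transpose (U t) ** H ** U t)
                 + anticomm (mat 1 - cscale 2 (outer psi0 psi0)) (kappa t)))) (at t)"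
    and t: "t \<in> T"
  shows "let rho0 = outer psi0 psi0;
             HH = (\<lambda>s. conj_transpose (U s) ** H ** U s);
             xi = cscale (- \<i> / hbar) (HH t) + anticomm (mat 1 - cscale 2 rho0) (kappa t);
             psi = (\<lambda>s. U s *v psi0);
             alpha = - 2 * \<i> * hbar * herm_inner psi0 (kappa t *v psi0)
         in comm (cscale (\<i> * hbar) xi - HH t) rho0 = 0
          \<and> HH differentiable (at t)
          \<and> vector_derivative HH (at t) = comm (HH t) (anticomm (mat 1 - cscale 2 rho0) (kappa t))
          \<and> trace (rho0 ** vector_derivative HH (at t)) = 0
          \<and> alpha \<in> \<real>
          \<and> psi differentiable (at t)
          \<and> (\<i> * hbar) *s vector_derivative psi (at t) = H *v psi t + alpha *s psi t"
proof -
  define rho where "rho = outer psi0 psi0"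
  define K where "K = kappa t"
  define P where "P = mat 1 - cscale 2 rho"
  define A where "A = anticomm P K"
  define HH where "HH = (\<lambda>s. conj_transpose (U s) ** H ** U s)"
  define xi where "xi = cscale (- \<i> / hbar) (HH t) + A"
  define c where "c = herm_inner psi0 (K *v psi0)"
  define V where "V = U t"
  have hn: "herm_inner psi0 psi0 = 1" using psi0 by (simp add: herm_inner_self)
  have rr: "rho ** rho = rho" unfolding rho_def by (simp add: outer_outer hn cscale_1)
  have rr': "X ** rho ** rho = X ** rho" for X by (simp add: matrix_mul_assoc[symmetric] rr)
  have rv: "rho *v psi0 = psi0" unfolding rho_def by (simp add: outer_mv hn)
  have two: "X - cscale 2 X = - X" for X :: "complex^'n^'n" by (simp add: cscale_def vec_eq_iff)
  have Prho: "P ** rho = - rho" unfolding P_def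
    by (simp add: matrix_sub_rdistrib cscale_mult_left[symmetric] rr two del: minus_equation_iff)
  have rhoP: "rho ** P = - rho" unfolding P_def
    by (simp add: matrix_sub_ldistrib cscale_mult_right rr two del: minus_equation_iff)
  have AR: "A ** rho = rho ** A"
  proof -
    have "A ** rho = P ** K ** rho - K ** rho"
      unfolding A_def anticomm_def
      by (simp add: matrix_add_rdistrib' matrix_mul_assoc[symmetric] Prho matrix_neg_right)
    also have "\<dots> = - cscale 2 (rho ** K ** rho)"
      unfolding P_def by (simp add: matrix_sub_rdistrib cscale_mult_left[symmetric] matrix_mul_assoc)
    also have "\<dots> = rho ** K ** P - rho ** K"
      unfolding P_def by (simp add: matrix_sub_ldistrib cscale_mult_right matrix_mul_assoc rr)
    also have "\<dots> = rho ** A"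
      unfolding A_def anticomm_def
      by (simp add: matrix_add_ldistrib matrix_mul_assoc rhoP matrix_neg_left)
    finally show ?thesis .
  qed
  have hb: "complex_of_real hbar \<noteq> 0" using hbar by simp
  have one: "(\<i> * hbar) * (- \<i> / hbar) = 1" using hb by (simp add: field_simps)
  have i1: "comm (cscale (\<i> * hbar) xi - HH t) rho = 0"
  proof -
    have "cscale (\<i> * hbar) xi - HH t = cscale (\<i> * hbar) A"
      unfolding xi_def using hbar by (simp add: cscale_add cscale_cscale one cscale_1)
    thus ?thesis unfolding comm_def
      by (simp add: cscale_mult_left[symmetric] cscale_mult_right AR)
  qed
  have Ku: "unitary V" using U_unitary t V_def by simp
  have Ksk: "conj_transpose K = - K" using kappa_skew t K_def by (simp add: skew_hermitian_def)
  have ctP: "conj_transpose P = P" unfolding P_def rho_def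
    by (simp add: ct_diff ct_mat ct_cscale ct_outer)
  have ctA: "conj_transpose A = - A" unfolding A_def anticomm_def
    by (simp add: ct_add ct_mult ctP Ksk matrix_neg_left matrix_neg_right)
  have ctH: "conj_transpose (HH t) = HH t" unfolding HH_def using hH
    by (simp add: ct_mult ct_ct hermitian_def matrix_mul_assoc)
  have cnjc: "cnj (- \<i> / complex_of_real hbar) = - (- \<i> / complex_of_real hbar)" by simp
  have ctxi: "conj_transpose xi = - cscale (- \<i> / hbar) (HH t) - A"
    unfolding xi_def by (simp add: ct_add ct_diff ct_cscale ctH ctA cnjc cscale_minus)
  have dU: "(U has_vector_derivative V ** xi) (at t)"
    using U_ode t unfolding V_def xi_def A_def P_def K_def HH_def rho_def by simp
  have dUc: "((\<lambda>s. conj_transpose (U s)) has_vector_derivative conj_transpose (V ** xi)) (at t)"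
    by (rule bounded_linear.has_vector_derivative[OF blin_ct dU])
  have dUcH: "((\<lambda>s. conj_transpose (U s) ** H) has_vector_derivative conj_transpose (V ** xi) ** H) (at t)"
    by (rule bounded_linear.has_vector_derivative[OF bounded_bilinear.bounded_linear_left[OF bbilin] dUc])
  have dHH0: "(HH has_vector_derivative
      (conj_transpose V ** H ** (V ** xi) + conj_transpose (V ** xi) ** H ** V)) (at t)"
    using bounded_bilinear.has_vector_derivative[OF bbilin dUcH dU] unfolding HH_def V_def by simp
  have eqd: "conj_transpose V ** H ** (V ** xi) + conj_transpose (V ** xi) ** H ** V = comm (HH t) A"
  proof -
    have "conj_transpose V ** H ** (V ** xi) + conj_transpose (V ** xi) ** H ** V
        = HH t ** xi + conj_transpose xi ** HH t"
      unfolding HH_def V_def by (simp add: ct_mult matrix_mul_assoc)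
    also have "\<dots> = comm (HH t) A" unfolding ctxi unfolding xi_def comm_def
      by (simp add: matrix_add_ldistrib matrix_sub_rdistrib matrix_neg_left cscale_mult_left[symmetric]
         cscale_mult_right)
    finally show ?thesis .
  qed
  have dHH: "(HH has_vector_derivative comm (HH t) A) (at t)" using dHH0 eqd by simp
  have vdHH: "vector_derivative HH (at t) = comm (HH t) A"
    using vector_derivative_at[OF dHH] .
  have diffHH: "HH differentiable (at t)" using differentiableI_vector[OF dHH] .
  have tr: "trace (rho ** vector_derivative HH (at t)) = 0"
  proof -
    have "rho ** (A ** HH t) = A ** (rho ** HH t)" by (simp add: matrix_mul_assoc AR)
    moreover have "trace (A ** (rho ** HH t)) = trace (rho ** HH t ** A)" by (rule trace_mul_sym)
    ultimately have "trace (rho ** (A ** HH t)) = trace (rho ** HH t ** A)" by simp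
    thus ?thesis unfolding vdHH comm_def
      by (simp add: matrix_sub_ldistrib trace_sub matrix_mul_assoc)
  qed
  have cc: "cnj c = - c"
  proof -
    have Kij: "cnj (K $ i $ j) = - K $ j $ i" for i j
      using arg_cong[OF Ksk, of "\<lambda>M. M $ j $ i"] by (simp add: conj_transpose_def)
    have "cnj c = (\<Sum>i\<in>UNIV. \<Sum>j\<in>UNIV. psi0 $ i * (cnj (K $ i $ j) * cnj (psi0 $ j)))"
      unfolding c_def herm_inner_def matrix_vector_mult_def
      by (simp add: sum_distrib_left mult.commute)
    also have "\<dots> = - (\<Sum>i\<in>UNIV. \<Sum>j\<in>UNIV. psi0 $ i * (K $ j $ i * cnj (psi0 $ j)))"
      by (simp add: Kij sum_negf)
    also have "\<dots> = - c"
      unfolding c_def herm_inner_def matrix_vector_mult_def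
      by (subst sum.swap) (simp add: sum_distrib_left algebra_simps)
    finally show ?thesis .
  qed
  have alreal: "- 2 * \<i> * hbar * c \<in> \<real>"
    unfolding Reals_cnj_iff using cc by simp
  have dpsi: "((\<lambda>s. U s *v psi0) has_vector_derivative (V ** xi) *v psi0) (at t)"
    by (rule bounded_linear.has_vector_derivative[OF blin_mv dU])
  have Av: "A *v psi0 = (- 2 * c) *s psi0"
  proof -
    have Pv: "P *v psi0 = - psi0" unfolding P_def
      by (simp add: matrix_vector_mult_diff_rdistrib cscale_mv rv vec_eq_iff)
    have Pw: "P *v w = w - (2 * herm_inner psi0 w) *s psi0" for w unfolding P_def rho_def
      by (simp add: matrix_vector_mult_diff_rdistrib cscale_mv outer_mv vec_eq_iff)
    have "A *v psi0 = P *v (K *v psi0) + K *v (P *v psi0)"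
      unfolding A_def anticomm_def by (simp add: matrix_vector_mult_add_rdistrib matrix_vector_mul_assoc)
    also have "\<dots> = (K *v psi0 - (2 * c) *s psi0) + K *v (- psi0)"
      by (simp only: Pv Pw[of "K *v psi0"] c_def)
    also have "\<dots> = (- 2 * c) *s psi0"
      by (simp add: vec_eq_iff matrix_vector_mult_def sum_negf)
    finally show ?thesis .
  qed
  have VV: "V *v (conj_transpose V *v y) = y" for y
    using Ku by (simp add: unitary_def matrix_vector_mul_assoc)
  have peq: "(\<i> * hbar) *s ((V ** xi) *v psi0) = H *v (V *v psi0) + (- 2 * \<i> * hbar * c) *s (V *v psi0)"
  proof -
    have "(V ** xi) *v psi0 = V *v ((- \<i> / hbar) *s (HH t *v psi0)) + V *v ((- 2 * c) *s psi0)"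
      unfolding xi_def by (simp add: matrix_vector_mul_assoc[symmetric] matrix_vector_mult_add_rdistrib
        matrix_vector_right_distrib matrix_vector_mult_diff_distrib mv_neg cscale_mv Av)
    also have "\<dots> = (- \<i> / hbar) *s (H *v (V *v psi0)) + (- 2 * c) *s (V *v psi0)"
      unfolding HH_def V_def[symmetric] by (simp add: mv_smult mv_neg matrix_vector_mul_assoc[symmetric] VV)
    finally have e: "(V ** xi) *v psi0 = (- \<i> / hbar) *s (H *v (V *v psi0)) + (- 2 * c) *s (V *v psi0)" .
    show ?thesis
    proof (rule vec_eq_iff[THEN iffD2, rule_format])
      fix i
      have "(\<i> * hbar) * ((- \<i> / hbar) * (H *v (V *v psi0)) $ i + (- 2 * c) * (V *v psi0) $ i)
          = ((\<i> * hbar) * (- \<i> / hbar)) * (H *v (V *v psi0)) $ i + (- 2 * \<i> * hbar * c) * (V *v psi0) $ i"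
        by (simp add: algebra_simps)
      thus "((\<i> * hbar) *s ((V ** xi) *v psi0)) $ i = (H *v (V *v psi0) + (- 2 * \<i> * hbar * c) *s (V *v psi0)) $ i"
        unfolding e one using hbar by simp
    qed
  qed
  have vdpsi: "vector_derivative (\<lambda>s. U s *v psi0) (at t) = (V ** xi) *v psi0"
    using vector_derivative_at[OF dpsi] .
  have diffpsi: "(\<lambda>s. U s *v psi0) differentiable (at t)" using differentiableI_vector[OF dpsi] .
  note facts = i1 diffHH vdHH tr alreal diffpsi
  show ?thesis
    using facts peq
    unfolding Let_def vdpsi
    unfolding rho_def K_def P_def A_def HH_def xi_def c_def V_def
    by simp
qed

end
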